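(* Let $d\ge1$, $f$ satisfy Assumption (F0) with $\frac{\alpha_2}{2+\alpha_2}\le\alpha_1$, $r_2=2+\alpha_2$, and let $r_0$ satisfy $\max(1,\frac{d\alpha_1}2)<r_0<2+\alpha_1$, $\frac12\le\frac{\alpha_1}{r_0}+\frac1{r_2}$, $1<\frac{\alpha_1+1}{r_0}+\frac1{r_2}$. Let $(\phi_j,\omega_j)_{j\in\mathbb N}$ satisfy Assumption (T1) with this $r_0$ and constant $a\in(0,1)$. Then there exist $c_1\in(0,a/2)$ and $C>0$, independent of the parameters $v_j,\gamma_j$, such that for every profile $R_\infty=\sum_jR_{\phi_j,\omega_j,0,v_j,\gamma_j}$ with $v_*:=\inf_{j\ne k}\sqrt{\omega_j}|v_k-v_j|$, the source term $H=f(R_\infty)-\sum_{j\in\mathbb N}f(R_j)$ satisfies $$\|H(t)\|_{L^\infty\cap L^{r_2'}}\le Ce^{-c_1v_*t}\qquad\forall t>0,$$ where $r_2'=r_2/(r_2-1)$.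
   Context: Assumption (F0): $f(u)=g(|u|^2)u$, $g\in C^0([0,\infty),\mathbb R)\cap C^2((0,\infty),\mathbb R)$, $g(0)=0$, $|sg'(s)|+|s^2g''(s)|\le C_0(s^{\alpha_1/2}+s^{\alpha_2/2})$ for $s>0$, $0<\alpha_1\le\alpha_2<\alpha_{\max}$ ($\alpha_{\max}=\infty$ for $d=1,2$, $4/(d-2)$ for $d\ge3$). Bound state: nontrivial $\phi\in H^1(\mathbb R^d)$ with $\Delta\phi+f(\phi)=\omega\phi$, $\omega>0$. Soliton: $R_{\phi,\omega,x^0,v,\gamma}(t,x)=e^{i(\omega t+\frac12v\cdot x-\frac14|v|^2t+\gamma)}\phi(x-x^0-vt)$; $R_j=R_{\phi_j,\omega_j,0,v_j,\gamma_j}$. Assumption (T1): there are $0<a<1$, $D_a>0$ independent of $j$ with $|\phi_j(x)|+\omega_j^{-1/2}|\nabla\phi_j(x)|\le D_a\omega_j^{1/\alpha_1}e^{-a\omega_j^{1/2}|x|}$, and $r_0\ge1$, $\frac{d\alpha_1}2<r_0<2+\alpha_1$, with $\sum_j\omega_j^{\frac1{\alpha_1}-\frac d{2r_0}}<\infty$. *)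

theory Defs
  imports "HOL-Analysis.Analysis"
begin

text \<open>Space dimension d = DIM('a); points of R^d are elements of a euclidean_space 'a.\<close>

definition pd :: "'a::euclidean_space \<Rightarrow> ('a \<Rightarrow> complex) \<Rightarrow> 'a \<Rightarrow> complex" where
  "pd b \<phi> x = vector_derivative (\<lambda>t::real. \<phi> (x + t *\<^sub>R b)) (at 0)"

definition gradnorm :: "('a::euclidean_space \<Rightarrow> complex) \<Rightarrow> 'a \<Rightarrow> real" where
  "gradnorm \<phi> x = sqrt (\<Sum>b\<in>Basis. (cmod (pd b \<phi> x))\<^sup>2)"

definition lap :: "('a::euclidean_space \<Rightarrow> complex) \<Rightarrow> 'a \<Rightarrow> complex" where
  "lap \<phi> x = (\<Sum>b\<in>Basis. pd b (pd b \<phi>) x)"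

definition C2fun :: "('a::euclidean_space \<Rightarrow> complex) \<Rightarrow> bool" where
  "C2fun \<phi> \<longleftrightarrow> (\<forall>x. \<phi> differentiable (at x)) \<and>
     (\<forall>b\<in>Basis. continuous_on UNIV (pd b \<phi>) \<and> (\<forall>x. pd b \<phi> differentiable (at x)) \<and>
        (\<forall>b'\<in>Basis. continuous_on UNIV (pd b' (pd b \<phi>))))"

definition in_H1 :: "('a::euclidean_space \<Rightarrow> complex) \<Rightarrow> bool" where
  "in_H1 \<phi> \<longleftrightarrow> \<phi> \<in> borel_measurable lebesgue \<and>
     integrable lebesgue (\<lambda>x. (cmod (\<phi> x))\<^sup>2) \<and>
     (\<forall>b\<in>Basis. pd b \<phi> \<in> borel_measurable lebesgue) \<and>
     integrable lebesgue (\<lambda>x. (gradnorm \<phi> x)\<^sup>2)"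

definition below_alpha_max :: "nat \<Rightarrow> real \<Rightarrow> bool" where
  "below_alpha_max d \<alpha> \<longleftrightarrow> (d \<le> 2 \<or> \<alpha> < 4 / (real d - 2))"

text \<open>Assumption (F0) on g (the nonlinearity is f(u) = g(|u|^2) u).\<close>
definition F0 :: "nat \<Rightarrow> (real \<Rightarrow> real) \<Rightarrow> real \<Rightarrow> real \<Rightarrow> bool" where
  "F0 d g \<alpha>1 \<alpha>2 \<longleftrightarrow>
     continuous_on {0..} g \<and> g 0 = 0 \<and>
     (\<forall>s>0. (g has_real_derivative deriv g s) (at s) \<and>
            (deriv g has_real_derivative deriv (deriv g) s) (at s)) \<and>
     continuous_on {0<..} (deriv (deriv g)) \<and>
     (\<exists>C0. \<forall>s>0. \<bar>s * deriv g s\<bar> + \<bar>s\<^sup>2 * deriv (deriv g) s\<bar>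
                 \<le> C0 * (s powr (\<alpha>1 / 2) + s powr (\<alpha>2 / 2))) \<and>
     0 < \<alpha>1 \<and> \<alpha>1 \<le> \<alpha>2 \<and> below_alpha_max d \<alpha>2"

definition fnl :: "(real \<Rightarrow> real) \<Rightarrow> complex \<Rightarrow> complex" where
  "fnl g u = complex_of_real (g ((cmod u)\<^sup>2)) * u"

definition bound_state :: "(real \<Rightarrow> real) \<Rightarrow> ('a::euclidean_space \<Rightarrow> complex) \<Rightarrow> real \<Rightarrow> bool" where
  "bound_state g \<phi> \<omega> \<longleftrightarrow> 0 < \<omega> \<and> (\<exists>x. \<phi> x \<noteq> 0) \<and> in_H1 \<phi> \<and> C2fun \<phi> \<and>
     (\<forall>x. lap \<phi> x + fnl g (\<phi> x) = complex_of_real \<omega> * \<phi> x)"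

definition soliton :: "('a::euclidean_space \<Rightarrow> complex) \<Rightarrow> real \<Rightarrow> 'a \<Rightarrow> real \<Rightarrow> real \<Rightarrow> 'a \<Rightarrow> complex" where
  "soliton \<phi> \<omega> v \<gamma> t x =
     exp (\<i> * complex_of_real (\<omega> * t + (1/2) * (v \<bullet> x) - (1/4) * (norm v)\<^sup>2 * t + \<gamma>))
       * \<phi> (x - t *\<^sub>R v)"

definition T1 :: "(nat \<Rightarrow> 'a::euclidean_space \<Rightarrow> complex) \<Rightarrow> (nat \<Rightarrow> real) \<Rightarrow> real \<Rightarrow> real \<Rightarrow> real \<Rightarrow> bool" where
  "T1 \<phi> \<omega> \<alpha>1 a r0 \<longleftrightarrow> 0 < a \<and> a < 1 \<and>
     (\<exists>D>0. \<forall>j x. cmod (\<phi> j x) + \<omega> j powr (-1/2) * gradnorm (\<phi> j) x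
                 \<le> D * \<omega> j powr (1 / \<alpha>1) * exp (- a * sqrt (\<omega> j) * norm x)) \<and>
     1 \<le> r0 \<and> real DIM('a) * \<alpha>1 / 2 < r0 \<and> r0 < 2 + \<alpha>1 \<and>
     summable (\<lambda>j. \<omega> j powr (1 / \<alpha>1 - real DIM('a) / (2 * r0)))"

definition vstar :: "(nat \<Rightarrow> real) \<Rightarrow> (nat \<Rightarrow> 'a::euclidean_space) \<Rightarrow> real" where
  "vstar \<omega> v = (INF jk \<in> {(j, k). j \<noteq> k}. sqrt (\<omega> (fst jk)) * norm (v (snd jk) - v (fst jk)))"

definition source :: "(real \<Rightarrow> real) \<Rightarrow> (nat \<Rightarrow> 'a::euclidean_space \<Rightarrow> complex) \<Rightarrow> (nat \<Rightarrow> real)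
    \<Rightarrow> (nat \<Rightarrow> 'a) \<Rightarrow> (nat \<Rightarrow> real) \<Rightarrow> real \<Rightarrow> 'a \<Rightarrow> complex" where
  "source g \<phi> \<omega> v \<gamma> t x =
     fnl g (\<Sum>j. soliton (\<phi> j) (\<omega> j) (v j) (\<gamma> j) t x)
     - (\<Sum>j. fnl g (soliton (\<phi> j) (\<omega> j) (v j) (\<gamma> j) t x))"

end

theory Submission
  imports Defs
begin

lemma exp_scale_integral:
  fixes y :: "'a::euclidean_space" and lam :: real
  assumes lam: "0 < lam"
  shows "(\<integral>\<^sup>+x. ennreal (exp (- lam * norm (x - y))) \<partial>lborel)
       = ennreal (1 / lam ^ DIM('a)) * (\<integral>\<^sup>+x. ennreal (exp (- norm (x::'a))) \<partial>lborel)"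
proof -
  have c: "1 / lam \<noteq> 0" using lam by simp
  have "(\<integral>\<^sup>+x. ennreal (exp (- lam * norm (x - y))) \<partial>lborel)
     = (\<integral>\<^sup>+x. ennreal (exp (- lam * norm (x - y))) \<partial>(density (distr lborel borel (\<lambda>x. y + (1/lam) *\<^sub>R x)) (\<lambda>_. \<bar>1/lam\<bar>^DIM('a))))"
    using lborel_affine[OF c, of y] by simp
  also have "\<dots> = (\<integral>\<^sup>+x. ennreal (\<bar>1/lam\<bar>^DIM('a)) * ennreal (exp (- lam * norm ((y + (1/lam) *\<^sub>R x) - y))) \<partial>lborel)"
    by (simp add: nn_integral_density nn_integral_distr)
  also have "\<dots> = (\<integral>\<^sup>+x. ennreal (1 / lam ^ DIM('a)) * ennreal (exp (- norm (x::'a))) \<partial>lborel)"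
  proof (rule nn_integral_cong)
    fix x :: 'a
    have "- lam * norm ((y + (1/lam) *\<^sub>R x) - y) = - norm x" using lam by simp
    then show "ennreal (\<bar>1/lam\<bar>^DIM('a)) * ennreal (exp (- lam * norm ((y + (1/lam) *\<^sub>R x) - y)))
      = ennreal (1 / lam ^ DIM('a)) * ennreal (exp (- norm x))" using lam by (simp add: power_divide)
  qed
  also have "\<dots> = ennreal (1 / lam ^ DIM('a)) * (\<integral>\<^sup>+x. ennreal (exp (- norm (x::'a))) \<partial>lborel)"
    by (rule nn_integral_cmult) simp
  finally show ?thesis .
qed

lemma ennreal_le_suminf: "(f::nat \<Rightarrow> ennreal) n \<le> suminf f"
  using sum_le_suminf[of f "{n}"] by (simp add: summableI)

lemma poly_exp_bound:
  fixes n :: nat and d :: nat assumes d: "d > 0"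
  shows "(real n + 1) ^ d \<le> (2 * real d) ^ d * exp ((real n + 1) / 2)"
proof -
  let ?y = "(real n + 1) / (2 * real d)"
  have y0: "0 \<le> ?y" by simp
  have "?y \<le> exp ?y" using exp_ge_add_one_self[of ?y] by linarith
  then have "?y ^ d \<le> exp ?y ^ d" by (intro power_mono) auto
  also have "exp ?y ^ d = exp (real d * ?y)" by (simp only: exp_of_nat_mult)
  also have "real d * ?y = (real n + 1) / 2" using d by (simp add: field_simps)
  finally have "?y ^ d \<le> exp ((real n + 1) / 2)" .
  moreover have "(real n + 1) ^ d = (2 * real d) ^ d * ?y ^ d"
    using d by (simp add: power_divide field_simps)
  ultimately show ?thesis using d by (simp add: mult_left_mono)
qed

lemma exp_norm_integral_finite:
  "(\<integral>\<^sup>+x. ennreal (exp (- norm (x::'a::euclidean_space))) \<partial>lborel) < top"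
proof -
  define d where "d = DIM('a)"
  define V where "V = unit_ball_vol (real d)"
  have d: "d > 0" by (simp add: d_def)
  have V: "0 \<le> V" by (simp add: V_def)
  have pw: "ennreal (exp (- norm x)) \<le> (\<Sum>n. ennreal (exp (- real n)) * indicator (ball (0::'a) (real n + 1)) x)" for x :: 'a
  proof -
    define n where "n = nat \<lfloor>norm x\<rfloor>"
    have n1: "real n \<le> norm x" unfolding n_def by (simp add: of_nat_nat)
    have n2: "norm x < real n + 1" unfolding n_def by (simp add: of_nat_nat)
    have "ennreal (exp (- norm x)) \<le> ennreal (exp (- real n)) * indicator (ball (0::'a) (real n + 1)) x"
      using n1 n2 by (simp add: indicator_def)
    also have "\<dots> \<le> (\<Sum>n. ennreal (exp (- real n)) * indicator (ball (0::'a) (real n + 1)) x)"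
      by (rule ennreal_le_suminf)
    finally show ?thesis .
  qed
  have "(\<integral>\<^sup>+x. ennreal (exp (- norm (x::'a))) \<partial>lborel)
     \<le> (\<integral>\<^sup>+x. (\<Sum>n. ennreal (exp (- real n)) * indicator (ball (0::'a) (real n + 1)) x) \<partial>lborel)"
    by (intro nn_integral_mono pw)
  also have "\<dots> = (\<Sum>n. (\<integral>\<^sup>+x. ennreal (exp (- real n)) * indicator (ball (0::'a) (real n + 1)) x \<partial>lborel))"
  proof (rule nn_integral_suminf)
    fix n :: nat
    have [measurable]: "ball (0::'a) (real n + 1) \<in> sets borel" by simp
    show "(\<lambda>x. ennreal (exp (- real n)) * indicator (ball (0::'a) (real n + 1)) x) \<in> borel_measurable lborel"
      by measurable
  qed
  also have "\<dots> = (\<Sum>n. ennreal (exp (- real n) * (V * (real n + 1) ^ d)))"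
    by (simp add: nn_integral_cmult_indicator emeasure_ball V_def d_def ennreal_mult)
  also have "\<dots> \<le> (\<Sum>n. ennreal (V * (2 * real d) ^ d * exp (1/2) * exp (- 1/2) ^ n))"
  proof (intro suminf_le ennreal_leI summableI)
    fix n
    have "exp (- real n) * (real n + 1) ^ d \<le> exp (- real n) * ((2 * real d) ^ d * exp ((real n + 1) / 2))"
      by (intro mult_left_mono poly_exp_bound d) simp
    also have "\<dots> = (2 * real d) ^ d * exp (1/2) * exp (- 1/2) ^ n"
      proof -
      have e1: "exp (- 1/2) ^ n = exp (real n * (-1/2))" by (simp only: exp_of_nat_mult)
      have e2: "exp (- real n) * exp ((real n + 1) / 2) = exp (- real n + (real n + 1) / 2)"
        by (simp only: exp_add)
      have e3: "exp (1/2) * exp (real n * (-1/2)) = exp (1/2 + real n * (-1/2))"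
        by (simp only: exp_add)
      have e4: "- real n + (real n + 1) / 2 = 1/2 + real n * (-1/2)" by (simp add: field_simps)
      show ?thesis using e1 e2 e3 e4 by (simp add: ac_simps)
    qed
    finally show "exp (- real n) * (V * (real n + 1) ^ d) \<le> V * (2 * real d) ^ d * exp (1/2) * exp (- 1/2) ^ n"
      using V by (metis (no_types, lifting) mult.assoc mult.left_commute mult_left_mono)
  qed
  also have "\<dots> < top"
  proof -
    have "summable (\<lambda>n. V * (2 * real d) ^ d * exp (1/2) * exp (- 1/2) ^ n)"
      by (intro summable_mult summable_geometric) simp
    then have "(\<Sum>n. ennreal (V * (2 * real d) ^ d * exp (1/2) * exp (- 1/2) ^ n)) \<noteq> top"
      by (rule ennreal_suminf_neq_top) (simp add: V)
    then show ?thesis by (simp add: top.not_eq_extremum)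
  qed
  finally show ?thesis .
qed

lemma F0_C0:
  assumes "F0 d g a1 a2"
  shows "\<exists>C0\<ge>0. \<forall>s>0. \<bar>s * deriv g s\<bar> \<le> C0 * (s powr (a1/2) + s powr (a2/2))"
proof -
  obtain C0 where C0: "\<forall>s>0. \<bar>s * deriv g s\<bar> + \<bar>s\<^sup>2 * deriv (deriv g) s\<bar> \<le> C0 * (s powr (a1/2) + s powr (a2/2))"
    using assms unfolding F0_def by blast
  have "0 \<le> C0 * (1 powr (a1/2) + 1 powr (a2/2))"
    using C0[rule_format, of 1] by (smt (verit))
  then have "C0 \<ge> 0" by simp
  moreover have "\<forall>s>0. \<bar>s * deriv g s\<bar> \<le> C0 * (s powr (a1/2) + s powr (a2/2))"
    using C0 by (smt (verit))
  ultimately show ?thesis by blast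
qed

lemma g_bound:
  assumes F: "F0 d g a1 a2"
  shows "\<exists>C\<ge>0. \<forall>s\<ge>0. \<bar>g s\<bar> \<le> C * (s powr (a1/2) + s powr (a2/2))"
proof -
  obtain C0 where C00: "C0 \<ge> 0" and C0: "\<forall>s>0. \<bar>s * deriv g s\<bar> \<le> C0 * (s powr (a1/2) + s powr (a2/2))"
    using F0_C0[OF F] by blast
  have cg: "continuous_on {0..} g" and g0: "g 0 = 0" and dg: "\<forall>s>0. (g has_real_derivative deriv g s) (at s)"
    and a1: "0 < a1" and a12: "a1 \<le> a2"
    using F unfolding F0_def by auto
  define k where "k s = C0 * ((2/a1) * s powr (a1/2) + (2/a2) * s powr (a2/2))" for s
  have k0: "k 0 = 0" by (simp add: k_def)
  have ck: "continuous_on {0..s} k" for s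
    unfolding k_def using a1 a12 by (intro continuous_intros continuous_on_powr') auto
  have dk: "(k has_real_derivative C0 * (x powr (a1/2 - 1) + x powr (a2/2 - 1))) (at x)" if "x > 0" for x
  proof -
    have "(k has_real_derivative C0 * ((2/a1) * ((a1/2) * x powr (a1/2 - 1)) + (2/a2) * ((a2/2) * x powr (a2/2 - 1)))) (at x)"
      unfolding k_def
      by (rule DERIV_cmult, rule DERIV_add; rule DERIV_cmult, rule has_real_derivative_powr, rule that)
    moreover have "C0 * ((2/a1) * ((a1/2) * x powr (a1/2 - 1)) + (2/a2) * ((a2/2) * x powr (a2/2 - 1)))
        = C0 * (x powr (a1/2 - 1) + x powr (a2/2 - 1))" using a1 a12 by simp
    ultimately show ?thesis by metis
  qed
  have gd: "\<bar>deriv g x\<bar> \<le> C0 * (x powr (a1/2 - 1) + x powr (a2/2 - 1))" if "x > 0" for x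
  proof -
    have "x * \<bar>deriv g x\<bar> \<le> C0 * (x powr (a1/2) + x powr (a2/2))"
      using C0 that by (simp add: abs_mult)
    moreover have "x powr (a1/2) = x * x powr (a1/2 - 1)" "x powr (a2/2) = x * x powr (a2/2 - 1)"
      using that by (simp_all add: powr_diff)
    ultimately have "x * \<bar>deriv g x\<bar> \<le> x * (C0 * (x powr (a1/2 - 1) + x powr (a2/2 - 1)))"
      by (simp add: algebra_simps)
    then show ?thesis using that by simp
  qed
  have up: "g s \<le> k s" and lo: "- k s \<le> g s" if "s \<ge> 0" for s
  proof -
    have c1: "continuous_on {0..s} (\<lambda>x. k x - g x)"
      by (intro continuous_intros ck continuous_on_subset[OF cg]) auto
    have "(\<lambda>x. k x - g x) 0 \<le> (\<lambda>x. k x - g x) s"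
    proof (rule DERIV_nonneg_imp_increasing_open[OF that _ c1])
      fix x assume "0 < x" "x < s"
      then show "\<exists>y. ((\<lambda>x. k x - g x) has_real_derivative y) (at x) \<and> 0 \<le> y"
        using dk[of x] dg gd[of x] by (intro exI[of _ "C0 * (x powr (a1/2 - 1) + x powr (a2/2 - 1)) - deriv g x"])
          (auto intro!: derivative_intros)
    qed
    then show "g s \<le> k s" using k0 g0 by simp
    have c2: "continuous_on {0..s} (\<lambda>x. k x + g x)"
      by (intro continuous_intros ck continuous_on_subset[OF cg]) auto
    have "(\<lambda>x. k x + g x) 0 \<le> (\<lambda>x. k x + g x) s"
    proof (rule DERIV_nonneg_imp_increasing_open[OF that _ c2])
      fix x assume "0 < x" "x < s"
      then show "\<exists>y. ((\<lambda>x. k x + g x) has_real_derivative y) (at x) \<and> 0 \<le> y"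
        using dk[of x] dg gd[of x] by (intro exI[of _ "C0 * (x powr (a1/2 - 1) + x powr (a2/2 - 1)) + deriv g x"])
          (auto intro!: derivative_intros)
    qed
    then show "- k s \<le> g s" using k0 g0 by simp
  qed
  have "\<bar>g s\<bar> \<le> (C0 * (2/a1)) * (s powr (a1/2) + s powr (a2/2))" if "s \<ge> 0" for s
  proof -
    have "(2/a2) \<le> 2/a1" using a1 a12 by (simp add: frac_le)
    then have "(2/a2) * s powr (a2/2) \<le> (2/a1) * s powr (a2/2)"
      by (intro mult_right_mono) auto
    then have "(2/a1) * s powr (a1/2) + (2/a2) * s powr (a2/2) \<le> (2/a1) * (s powr (a1/2) + s powr (a2/2))"
      by (simp add: algebra_simps)
    then have "k s \<le> C0 * ((2/a1) * (s powr (a1/2) + s powr (a2/2)))"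
      unfolding k_def using C00 by (intro mult_left_mono)
    then have "k s \<le> (C0 * (2/a1)) * (s powr (a1/2) + s powr (a2/2))"
      by (simp add: mult.assoc)
    then show ?thesis using up[OF that] lo[OF that] by simp
  qed
  moreover have "C0 * (2/a1) \<ge> 0" using C00 a1 by simp
  ultimately show ?thesis by blast
qed

lemma g_small:
  assumes F: "F0 d g a1 a2" and M: "0 \<le> M"
  shows "\<exists>K\<ge>0. \<forall>r. 0 \<le> r \<longrightarrow> r \<le> M \<longrightarrow> \<bar>g (r\<^sup>2)\<bar> \<le> K * r powr a1"
proof -
  obtain C where C0: "C \<ge> 0" and C: "\<forall>s\<ge>0. \<bar>g s\<bar> \<le> C * (s powr (a1/2) + s powr (a2/2))"
    using g_bound[OF F] by blast
  have a1: "0 < a1" and a12: "a1 \<le> a2" using F unfolding F0_def by auto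
  define K where "K = C * (1 + M powr (a2 - a1))"
  have K0: "K \<ge> 0" unfolding K_def using C0 by simp
  have "\<bar>g (r\<^sup>2)\<bar> \<le> K * r powr a1" if r: "0 \<le> r" "r \<le> M" for r
  proof (cases "r = 0")
    case True
    then show ?thesis using F unfolding F0_def by simp
  next
    case False
    then have rp: "r > 0" using r by simp
    have sq: "(r\<^sup>2) powr (a/2) = r powr a" for a
    proof -
      have "r\<^sup>2 = r powr 2" using rp by (simp add: powr_realpow)
      then have "(r\<^sup>2) powr (a/2) = (r powr 2) powr (a/2)" by simp
      also have "\<dots> = r powr (2 * (a/2))" by (rule powr_powr)
      finally show ?thesis by simp
    qed
    have "r powr a2 = r powr a1 * r powr (a2 - a1)" using rp by (simp add: powr_add[symmetric])
    also have "\<dots> \<le> r powr a1 * M powr (a2 - a1)"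
      using r a12 by (intro mult_left_mono powr_mono2) auto
    finally have h: "r powr a2 \<le> r powr a1 * M powr (a2 - a1)" .
    have "\<bar>g (r\<^sup>2)\<bar> \<le> C * (r powr a1 + r powr a2)" using C[rule_format, of "r\<^sup>2"] by (simp add: sq)
    also have "\<dots> \<le> C * (r powr a1 + r powr a1 * M powr (a2 - a1))"
      using h C0 by (intro mult_left_mono) auto
    also have "\<dots> = K * r powr a1" unfolding K_def by (simp add: algebra_simps)
    finally show ?thesis .
  qed
  then show ?thesis using K0 by blast
qed

lemma fnl_growth:
  assumes F: "F0 d g a1 a2" and M: "0 \<le> M"
  shows "\<exists>K\<ge>0. \<forall>z. cmod z \<le> M \<longrightarrow> cmod (fnl g z) \<le> K * cmod z powr (1 + a1)"
proof -
  obtain K where K0: "K \<ge> 0" and K: "\<forall>r. 0 \<le> r \<longrightarrow> r \<le> M \<longrightarrow> \<bar>g (r\<^sup>2)\<bar> \<le> K * r powr a1"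
    using g_small[OF F M] by blast
  have "cmod (fnl g z) \<le> K * cmod z powr (1 + a1)" if "cmod z \<le> M" for z
  proof -
    have "cmod (fnl g z) = \<bar>g ((cmod z)\<^sup>2)\<bar> * cmod z" unfolding fnl_def by (simp add: norm_mult)
    also have "\<dots> \<le> K * cmod z powr a1 * cmod z"
      using K that by (intro mult_right_mono) auto
    also have "\<dots> = K * cmod z powr (1 + a1)"
      by (cases "z = 0") (simp_all add: powr_add)
    finally show ?thesis .
  qed
  then show ?thesis using K0 by blast
qed

lemma fnl_lip_aux:
  assumes F: "F0 d g a1 a2" and M: "0 \<le> M"
  shows "\<exists>L\<ge>0. \<forall>z w. cmod w \<le> cmod z \<longrightarrow> cmod z \<le> M \<longrightarrow> cmod (fnl g z - fnl g w) \<le> L * cmod (z - w)"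
proof -
  obtain K where K0: "K \<ge> 0" and K: "\<forall>r. 0 \<le> r \<longrightarrow> r \<le> M \<longrightarrow> \<bar>g (r\<^sup>2)\<bar> \<le> K * r powr a1"
    using g_small[OF F M] by blast
  obtain C0 where C00: "C0 \<ge> 0" and C0: "\<forall>s>0. \<bar>s * deriv g s\<bar> \<le> C0 * (s powr (a1/2) + s powr (a2/2))"
    using F0_C0[OF F] by blast
  have dg: "\<forall>s>0. (g has_real_derivative deriv g s) (at s)" using F unfolding F0_def by auto
  define Q where "Q = 2 * C0 * ((M\<^sup>2) powr (a1/2) + (M\<^sup>2) powr (a2/2))"
  define L where "L = K * M powr a1 + Q"
  have Q0: "Q \<ge> 0" unfolding Q_def using C00 by simp
  have L0: "L \<ge> 0" unfolding L_def using K0 Q0 by simp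
  have main: "cmod (fnl g z - fnl g w) \<le> L * cmod (z - w)" if zw: "cmod w \<le> cmod z" "cmod z \<le> M" for z w
  proof -
    define rz where "rz = cmod z"
    define rw where "rw = cmod w"
    have eq: "fnl g z - fnl g w = complex_of_real (g (rz\<^sup>2)) * (z - w) + complex_of_real (g (rz\<^sup>2) - g (rw\<^sup>2)) * w"
      unfolding fnl_def rz_def rw_def by (simp add: algebra_simps)
    have t1: "cmod (complex_of_real (g (rz\<^sup>2)) * (z - w)) \<le> K * M powr a1 * cmod (z - w)"
    proof -
      have "\<bar>g (rz\<^sup>2)\<bar> \<le> K * rz powr a1" using K zw unfolding rz_def by auto
      also have "\<dots> \<le> K * M powr a1" using K0 zw unfolding rz_def
        by (intro mult_left_mono powr_mono2) (auto simp: F[unfolded F0_def] less_imp_le)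
      finally show ?thesis by (simp add: norm_mult mult_right_mono)
    qed
    have t2: "\<bar>g (rz\<^sup>2) - g (rw\<^sup>2)\<bar> * rw \<le> Q * (rz - rw)"
    proof (cases "rw = 0 \<or> rw = rz")
      case True
      then show ?thesis using Q0 zw unfolding rz_def rw_def by auto
    next
      case False
      then have lt: "0 < rw" "rw < rz" using zw unfolding rz_def rw_def by auto
      have der: "((\<lambda>r. g (r\<^sup>2)) has_real_derivative deriv g (x\<^sup>2) * (2 * x)) (at x)" if "rw \<le> x" for x
      proof -
        have xp: "x > 0" using lt that by simp
        have "(g has_real_derivative deriv g (x\<^sup>2)) (at (x\<^sup>2))" using dg xp by simp
        moreover have "((\<lambda>r. r\<^sup>2) has_real_derivative 2 * x) (at x)"
          by (auto intro!: derivative_eq_intros)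
        ultimately show ?thesis by (rule DERIV_chain2)
      qed
      obtain xi where xi: "rw < xi" "xi < rz"
        and mv: "g (rz\<^sup>2) - g (rw\<^sup>2) = (rz - rw) * (deriv g (xi\<^sup>2) * (2 * xi))"
        using MVT2[OF lt(2), of "\<lambda>r. g (r\<^sup>2)" "\<lambda>x. deriv g (x\<^sup>2) * (2 * x)"] der by auto
      have xip: "xi > 0" using xi lt by simp
      define X where "X = C0 * ((M\<^sup>2) powr (a1/2) + (M\<^sup>2) powr (a2/2))"
      have s1: "\<bar>g (rz\<^sup>2) - g (rw\<^sup>2)\<bar> * rw = (rz - rw) * (2 * (\<bar>deriv g (xi\<^sup>2)\<bar> * xi * rw))"
        using mv xi lt by (simp add: abs_mult)
      have s2: "\<bar>deriv g (xi\<^sup>2)\<bar> * xi * rw \<le> \<bar>deriv g (xi\<^sup>2)\<bar> * xi * xi"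
        using xi lt by (intro mult_left_mono) auto
      have s3: "\<bar>deriv g (xi\<^sup>2)\<bar> * xi * xi = \<bar>xi\<^sup>2 * deriv g (xi\<^sup>2)\<bar>"
        using xip by (simp add: abs_mult power2_eq_square)
      have s4: "\<bar>xi\<^sup>2 * deriv g (xi\<^sup>2)\<bar> \<le> C0 * ((xi\<^sup>2) powr (a1/2) + (xi\<^sup>2) powr (a2/2))"
        using C0 xip by simp
      have s5: "C0 * ((xi\<^sup>2) powr (a1/2) + (xi\<^sup>2) powr (a2/2)) \<le> X"
      proof -
        have xm: "xi\<^sup>2 \<le> M\<^sup>2" using xi lt zw unfolding rz_def by (intro power_mono) auto
        have "(xi\<^sup>2) powr (a1/2) \<le> (M\<^sup>2) powr (a1/2)" "(xi\<^sup>2) powr (a2/2) \<le> (M\<^sup>2) powr (a2/2)"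
          using xm F unfolding F0_def by (auto intro!: powr_mono2)
        then show ?thesis unfolding X_def using C00 by (intro mult_left_mono) auto
      qed
      have "\<bar>deriv g (xi\<^sup>2)\<bar> * xi * rw \<le> X" using s2 s3 s4 s5 by linarith
      then have "(rz - rw) * (2 * (\<bar>deriv g (xi\<^sup>2)\<bar> * xi * rw)) \<le> (rz - rw) * (2 * X)"
        using lt by (intro mult_left_mono) auto
      also have "(rz - rw) * (2 * X) = Q * (rz - rw)" unfolding Q_def X_def by (simp add: ac_simps)
      finally show ?thesis using s1 by (simp only:)
    qed
    have "rz - rw \<le> cmod (z - w)" unfolding rz_def rw_def by (rule norm_triangle_ineq2)
    then have t2': "cmod (complex_of_real (g (rz\<^sup>2) - g (rw\<^sup>2)) * w) \<le> Q * cmod (z - w)"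
    proof -
      have "cmod (complex_of_real (g (rz\<^sup>2) - g (rw\<^sup>2)) * w) = \<bar>g (rz\<^sup>2) - g (rw\<^sup>2)\<bar> * rw"
        unfolding rw_def by (simp only: norm_mult norm_of_real)
      also have "\<dots> \<le> Q * (rz - rw)" by (rule t2)
      also have "\<dots> \<le> Q * cmod (z - w)" using \<open>rz - rw \<le> cmod (z - w)\<close> Q0 by (rule mult_left_mono)
      finally show ?thesis .
    qed
    have "cmod (fnl g z - fnl g w) \<le> K * M powr a1 * cmod (z - w) + Q * cmod (z - w)"
      unfolding eq using t1 t2' norm_triangle_ineq[of "complex_of_real (g (rz\<^sup>2)) * (z - w)" "complex_of_real (g (rz\<^sup>2) - g (rw\<^sup>2)) * w"]
      by linarith
    then show ?thesis unfolding L_def by (simp add: algebra_simps)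
  qed
  show ?thesis using L0 main by blast
qed

lemma fnl_lip:
  assumes F: "F0 d g a1 a2" and M: "0 \<le> M"
  shows "\<exists>L\<ge>0. \<forall>z w. cmod z \<le> M \<longrightarrow> cmod w \<le> M \<longrightarrow> cmod (fnl g z - fnl g w) \<le> L * cmod (z - w)"
proof -
  obtain L where L0: "L \<ge> 0" and L: "\<forall>z w. cmod w \<le> cmod z \<longrightarrow> cmod z \<le> M \<longrightarrow> cmod (fnl g z - fnl g w) \<le> L * cmod (z - w)"
    using fnl_lip_aux[OF F M] by blast
  have "cmod (fnl g z - fnl g w) \<le> L * cmod (z - w)" if "cmod z \<le> M" "cmod w \<le> M" for z w
  proof (cases "cmod w \<le> cmod z")
    case True then show ?thesis using L that by blast
  next
    case False
    then have "cmod (fnl g w - fnl g z) \<le> L * cmod (w - z)" using L that by auto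
    then show ?thesis by (simp add: norm_minus_commute)
  qed
  then show ?thesis using L0 by blast
qed

lemma fnl_zero: "fnl g 0 = 0" by (simp add: fnl_def)

lemma suminf_split_one:
  fixes f :: "nat \<Rightarrow> 'b::real_normed_vector"
  assumes "summable f"
  shows "suminf f = f J + (\<Sum>k. if k = J then 0 else f k)"
proof -
  have "(\<lambda>k. f k - (if k = J then f k else 0)) sums (suminf f - f J)"
    using summable_sums[OF assms] sums_single[of J f] by (rule sums_diff)
  moreover have "(\<lambda>k. f k - (if k = J then f k else 0)) = (\<lambda>k. if k = J then 0 else f k)"
    by auto
  ultimately have "(\<lambda>k. if k = J then 0 else f k) sums (suminf f - f J)" by simp
  then show ?thesis by (simp add: sums_iff)
qed

lemma term_le_suminf:
  fixes c :: "nat \<Rightarrow> real"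
  assumes "summable c" "\<And>j. c j \<ge> 0"
  shows "c J \<le> suminf c"
  using sum_le_suminf[of c "{J}"] assms by simp

lemma key_pointwise:
  fixes u :: "nat \<Rightarrow> complex" and c b :: "nat \<Rightarrow> real"
  assumes c: "summable c" "\<And>j. c j \<ge> 0"
    and b: "\<And>j. 0 \<le> b j"
    and u: "\<And>j. cmod (u j) \<le> c j * b j"
    and bb: "\<And>j k. j \<noteq> k \<Longrightarrow> b j * b k \<le> E" and E: "E \<ge> 0"
    and b1: "\<And>j. b j \<le> 1"
    and L: "L \<ge> 0" "\<forall>z w. cmod z \<le> suminf c \<longrightarrow> cmod w \<le> suminf c \<longrightarrow> cmod (fnl g z - fnl g w) \<le> L * cmod (z - w)"
  shows "cmod (fnl g (\<Sum>j. u j) - (\<Sum>j. fnl g (u j))) \<le> 2 * L * suminf c * sqrt E"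
proof -
  define s where "s = sqrt E"
  define Ms where "Ms = suminf c"
  have s0: "s \<ge> 0" unfolding s_def using E by simp
  have Ms0: "Ms \<ge> 0" unfolding Ms_def using c by (simp add: suminf_nonneg)
  obtain J where J: "\<And>k. k \<noteq> J \<Longrightarrow> b k \<le> s"
  proof (cases "\<exists>J. b J > s")
    case True
    then obtain J where bJ: "b J > s" by blast
    have "b k \<le> s" if "k \<noteq> J" for k
    proof (rule ccontr)
      assume "\<not> b k \<le> s"
      then have "b k > s" by simp
      then have "b J * b k > s * s" using bJ s0 by (intro mult_strict_mono) auto
      moreover have "s * s = E" unfolding s_def using E by simp
      ultimately show False using bb[of J k] that by simp
    qed
    then show ?thesis using that by blast
  next
    case False
    then show ?thesis using that[of 0] by (simp add: not_less)
  qed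
  have cle: "c j \<le> Ms" for j unfolding Ms_def using c by (rule term_le_suminf)
  have un: "cmod (u j) \<le> c j" for j
    using u[of j] b1[of j] c(2)[of j] by (smt (verit) mult_left_le)
  have su: "summable u" by (rule summable_comparison_test'[OF c(1)]) (rule un)
  have Sle: "cmod (\<Sum>j. u j) \<le> Ms" unfolding Ms_def using un c(1) by (rule norm_suminf_le)
  have uJ: "cmod (u J) \<le> Ms" using un[of J] cle[of J] by linarith
  have fu: "cmod (fnl g (u j)) \<le> L * c j" for j
  proof -
    have "cmod (fnl g (u j) - fnl g 0) \<le> L * cmod (u j - 0)"
      using L(2) un[of j] cle[of j] Ms0 unfolding Ms_def by (metis norm_zero order_trans)
    then have "cmod (fnl g (u j)) \<le> L * cmod (u j)" by (simp add: fnl_def)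
    also have "\<dots> \<le> L * c j" using un L(1) by (simp add: mult_left_mono)
    finally show ?thesis .
  qed
  have sfu: "summable (\<lambda>j. fnl g (u j))"
    by (rule summable_comparison_test'[OF summable_mult[OF c(1), of L]]) (rule fu)
  define R where "R = (\<Sum>k. if k = J then 0 else u k)"
  define Rf where "Rf = (\<Sum>k. if k = J then 0 else fnl g (u k))"
  have S: "(\<Sum>j. u j) = u J + R" unfolding R_def using su by (rule suminf_split_one)
  have Sf: "(\<Sum>j. fnl g (u j)) = fnl g (u J) + Rf" unfolding Rf_def using sfu by (rule suminf_split_one)
  have bnd: "norm (if k = J then 0 else u k) \<le> s * c k" for k
  proof (cases "k = J")
    case True then show ?thesis using s0 c(2)[of k] by simp
  next
    case False
    have "c k * b k \<le> c k * s" using J[OF False] c(2)[of k] by (rule mult_left_mono)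
    then show ?thesis using u[of k] False by (simp add: mult.commute)
  qed
  have Rle: "cmod R \<le> s * Ms"
  proof -
    have "cmod R \<le> (\<Sum>k. s * c k)" unfolding R_def
      by (rule norm_suminf_le[OF bnd summable_mult[OF c(1)]])
    also have "\<dots> = s * Ms" unfolding Ms_def using c(1) by (rule suminf_mult)
    finally show ?thesis .
  qed
  have bndf: "norm (if k = J then 0 else fnl g (u k)) \<le> L * (s * c k)" for k
  proof (cases "k = J")
    case True then show ?thesis using L s0 c(2)[of k] by simp
  next
    case False
    have "cmod (fnl g (u k) - fnl g 0) \<le> L * cmod (u k - 0)"
      using L(2) un[of k] cle[of k] Ms0 unfolding Ms_def by (metis norm_zero order_trans)
    then have "cmod (fnl g (u k)) \<le> L * cmod (u k)" by (simp add: fnl_def)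
    also have "\<dots> \<le> L * (s * c k)" using bnd[of k] False L(1) by (simp add: mult_left_mono)
    finally show ?thesis using False by simp
  qed
  have Rfle: "cmod Rf \<le> L * (s * Ms)"
  proof -
    have "cmod Rf \<le> (\<Sum>k. L * (s * c k))" unfolding Rf_def
      by (rule norm_suminf_le[OF bndf summable_mult[OF summable_mult[OF c(1)]]])
    also have "\<dots> = L * (s * Ms)" unfolding Ms_def using c(1)
      by (simp add: suminf_mult[symmetric] summable_mult)
    finally show ?thesis .
  qed
  have "cmod (u J + R) \<le> Ms" using S Sle by simp
  then have d1: "cmod (fnl g (u J + R) - fnl g (u J)) \<le> L * cmod R"
    using L(2) uJ unfolding Ms_def by (metis add_diff_cancel_left')
  have "fnl g (\<Sum>j. u j) - (\<Sum>j. fnl g (u j)) = (fnl g (u J + R) - fnl g (u J)) - Rf"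
    using S Sf by simp
  then have "cmod (fnl g (\<Sum>j. u j) - (\<Sum>j. fnl g (u j))) \<le> cmod (fnl g (u J + R) - fnl g (u J)) + cmod Rf"
    by (simp add: norm_triangle_ineq4)
  also have "\<dots> \<le> L * (s * Ms) + L * (s * Ms)"
    using d1 Rfle Rle L(1) by (meson add_mono mult_left_mono order_trans)
  finally show ?thesis unfolding s_def Ms_def by (simp add: algebra_simps)
qed

lemma powr_1plus: "(x::real) \<ge> 0 \<Longrightarrow> x powr (1 + a) = x * x powr a"
  by (cases "x = 0") (simp_all add: powr_add)

lemma key_growth:
  fixes u :: "nat \<Rightarrow> complex" and c b :: "nat \<Rightarrow> real"
  assumes c: "summable c" "\<And>j. c j \<ge> 0"
    and b: "\<And>j. 0 \<le> b j" "\<And>j. b j \<le> 1"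
    and u: "\<And>j. cmod (u j) \<le> c j * b j"
    and K: "K \<ge> 0" "\<forall>z. cmod z \<le> suminf c \<longrightarrow> cmod (fnl g z) \<le> K * cmod z powr (1 + a1)"
    and a1: "a1 > 0"
  shows "cmod (fnl g (\<Sum>j. u j) - (\<Sum>j. fnl g (u j))) \<le> 2 * K * (\<Sum>j. c j * b j) powr (1 + a1)"
proof -
  define cb where "cb j = c j * b j" for j
  have cb0: "cb j \<ge> 0" for j unfolding cb_def using c b by simp
  have cbc: "norm (cb j) \<le> c j" for j unfolding cb_def using c(2)[of j] b[of j]
    by (simp add: abs_mult mult_left_le)
  have scb: "summable cb" by (rule summable_comparison_test'[OF c(1)]) (rule cbc)
  define F where "F = suminf cb"
  have F0: "F \<ge> 0" unfolding F_def using scb cb0 by (simp add: suminf_nonneg)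
  have cbc': "cb j \<le> c j" for j using cbc[of j] by (simp add: abs_le_iff)
  have Fc: "F \<le> suminf c" unfolding F_def using cbc' scb c(1) by (rule suminf_le)
  have cbF: "cb j \<le> F" for j unfolding F_def using scb cb0 by (rule term_le_suminf)
  have Sle: "cmod (\<Sum>j. u j) \<le> F" unfolding F_def using u scb unfolding cb_def
    by (rule norm_suminf_le)
  have t1: "cmod (fnl g (\<Sum>j. u j)) \<le> K * F powr (1 + a1)"
  proof -
    have "cmod (fnl g (\<Sum>j. u j)) \<le> K * cmod (\<Sum>j. u j) powr (1 + a1)"
      using K(2) Sle Fc by auto
    also have "\<dots> \<le> K * F powr (1 + a1)" using Sle K(1) a1
      by (intro mult_left_mono powr_mono2) auto
    finally show ?thesis .
  qed
  have fu: "norm (fnl g (u j)) \<le> K * F powr a1 * cb j" for j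
  proof -
    have uc: "cmod (u j) \<le> cb j" using u unfolding cb_def by simp
    have "cmod (fnl g (u j)) \<le> K * cmod (u j) powr (1 + a1)"
      using K(2) uc cbF[of j] Fc by auto
    also have "\<dots> \<le> K * cb j powr (1 + a1)" using uc K(1) a1
      by (intro mult_left_mono powr_mono2) auto
    also have "cb j powr (1 + a1) = cb j * cb j powr a1" using cb0 by (rule powr_1plus)
    also have "K * (cb j * cb j powr a1) \<le> K * (cb j * F powr a1)"
      using K(1) cb0[of j] cbF[of j] a1 by (intro mult_left_mono powr_mono2) auto
    finally show ?thesis by (simp add: ac_simps)
  qed
  have t2: "cmod (\<Sum>j. fnl g (u j)) \<le> K * F powr (1 + a1)"
  proof -
    have "cmod (\<Sum>j. fnl g (u j)) \<le> (\<Sum>j. K * F powr a1 * cb j)"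
      by (rule norm_suminf_le[OF fu summable_mult[OF scb]])
    also have "\<dots> = K * F powr a1 * F" unfolding F_def using scb by (rule suminf_mult)
    also have "\<dots> = K * F powr (1 + a1)" using powr_1plus[OF F0, of a1] by simp
    finally show ?thesis .
  qed
  have "cmod (fnl g (\<Sum>j. u j) - (\<Sum>j. fnl g (u j))) \<le> cmod (fnl g (\<Sum>j. u j)) + cmod (\<Sum>j. fnl g (u j))"
    by (rule norm_triangle_ineq4)
  also have "\<dots> \<le> 2 * K * F powr (1 + a1)" using t1 t2 by simp
  finally show ?thesis unfolding F_def cb_def .
qed

lemma tangent_powr:
  fixes y m r :: real
  assumes y: "y \<ge> 0" and m: "m > 0" and r: "r \<ge> 1"
  shows "m powr r + r * m powr (r - 1) * (y - m) \<le> y powr r"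
proof -
  have dpow: "((\<lambda>x. x powr r) has_real_derivative r * x powr (r - 1)) (at x)" if "x > 0" for x
    using that by (rule has_real_derivative_powr)
  consider "y = m" | "y > m" | "y < m" by linarith
  then show ?thesis
  proof cases
    case 1 then show ?thesis by simp
  next
    case 2
    obtain z where z: "m < z" "z < y" and eq: "y powr r - m powr r = (y - m) * (r * z powr (r - 1))"
      using MVT2[OF 2, of "\<lambda>x. x powr r" "\<lambda>x. r * x powr (r - 1)"] dpow m by force
    have "m powr (r - 1) \<le> z powr (r - 1)" using z m r by (intro powr_mono2) auto
    then have "r * m powr (r - 1) * (y - m) \<le> (y - m) * (r * z powr (r - 1))"
      using 2 r by (simp add: mult_left_mono mult.commute mult.left_commute)
    then show ?thesis using eq by linarith
  next
    case 3
    have cont: "continuous_on {y..m} (\<lambda>x. x powr r)"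
      using y r by (intro continuous_on_powr') auto
    obtain l z where z: "y < z" "z < m" and dz: "((\<lambda>x. x powr r) has_real_derivative l) (at z)"
      and eq: "m powr r - y powr r = (m - y) * l"
    proof -
      have "(\<lambda>x. x powr r) differentiable (at x)" if "y < x" "x < m" for x
        using dpow[of x] that y by (auto simp: real_differentiable_def)
      then show ?thesis using MVT[OF 3 cont] that by blast
    qed
    have zp: "z > 0" using z y by linarith
    have "l = r * z powr (r - 1)" using DERIV_unique[OF dz dpow[OF zp]] .
    moreover have "z powr (r - 1) \<le> m powr (r - 1)" using z zp r by (intro powr_mono2) auto
    ultimately have "(m - y) * l \<le> (m - y) * (r * m powr (r - 1))"
      using 3 r by (intro mult_left_mono) auto
    then show ?thesis using eq by (simp add: algebra_simps)
  qed
qed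

lemma jensen_series:
  fixes w y :: "nat \<Rightarrow> real"
  assumes w: "\<And>j. w j > 0" "summable w"
    and y: "\<And>j. y j \<ge> 0" and wy: "summable (\<lambda>j. w j * y j)"
    and wyr: "summable (\<lambda>j. w j * y j powr r)" and r: "r \<ge> 1"
  shows "(\<Sum>j. w j * y j) powr r \<le> (\<Sum>j. w j) powr (r - 1) * (\<Sum>j. w j * y j powr r)"
proof -
  define W where "W = (\<Sum>j. w j)"
  define P where "P = (\<Sum>j. w j * y j)"
  have Wp: "W > 0" unfolding W_def using w suminf_pos by blast
  have P0: "P \<ge> 0" unfolding P_def using wy
    by (rule suminf_nonneg) (intro mult_nonneg_nonneg less_imp_le[OF w(1)] y)
  have R0: "(\<Sum>j. w j * y j powr r) \<ge> 0" using wyr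
    by (rule suminf_nonneg) (intro mult_nonneg_nonneg less_imp_le[OF w(1)] powr_ge_zero)
  show ?thesis
  proof (cases "P = 0")
    case True
    then show ?thesis unfolding P_def[symmetric] W_def[symmetric] using r R0 Wp by simp
  next
    case False
    then have Pp: "P > 0" using P0 by simp
    define m where "m = P / W"
    have mp: "m > 0" unfolding m_def using Pp Wp by simp
    have tl: "w j * (m powr r + r * m powr (r - 1) * (y j - m)) \<le> w j * y j powr r" for j
      using tangent_powr[OF y mp r] w(1)[of j] by (intro mult_left_mono) auto
    have sl: "summable (\<lambda>j. w j * (m powr r + r * m powr (r - 1) * (y j - m)))"
    proof -
      have "(\<lambda>j. w j * (m powr r + r * m powr (r - 1) * (y j - m)))
          = (\<lambda>j. (m powr r - r * m powr (r - 1) * m) * w j + (r * m powr (r - 1)) * (w j * y j))"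
        by (auto simp: algebra_simps)
      then show ?thesis using w wy by (simp add: summable_add summable_mult)
    qed
    have "(\<Sum>j. w j * (m powr r + r * m powr (r - 1) * (y j - m)))
        = (m powr r - r * m powr (r - 1) * m) * W + (r * m powr (r - 1)) * P"
    proof -
      have "(\<lambda>j. w j * (m powr r + r * m powr (r - 1) * (y j - m)))
          = (\<lambda>j. (m powr r - r * m powr (r - 1) * m) * w j + (r * m powr (r - 1)) * (w j * y j))"
        by (auto simp: algebra_simps)
      then show ?thesis unfolding W_def P_def using w wy
        by (simp add: suminf_add[symmetric] summable_mult suminf_mult)
    qed
    also have "\<dots> = m powr r * W" unfolding m_def using Wp by (simp add: algebra_simps)
    finally have lhs: "(\<Sum>j. w j * (m powr r + r * m powr (r - 1) * (y j - m))) = m powr r * W" .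
    have "m powr r * W \<le> (\<Sum>j. w j * y j powr r)"
      using suminf_le[OF tl sl wyr] lhs by simp
    moreover have "P powr r = W powr (r - 1) * (m powr r * W)"
    proof -
      have "P = m * W" unfolding m_def using Wp by simp
      then have "P powr r = m powr r * W powr r" using mp Wp by (simp add: powr_mult)
      also have "W powr r = W powr (r - 1) * W" using Wp by (simp add: powr_diff)
      finally show ?thesis by (simp add: ac_simps)
    qed
    ultimately show ?thesis unfolding P_def[symmetric] W_def[symmetric]
      using Wp by (simp add: mult_left_mono)
  qed
qed

lemma integral_F_bound:
  fixes p :: "nat \<Rightarrow> 'a::euclidean_space" and w c mu :: "nat \<Rightarrow> real"
  assumes w: "\<And>j. w j > 0" "summable w"
    and c: "\<And>j. c j \<ge> 0"
    and mu: "\<And>j. mu j > 0"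
    and r: "r \<ge> 1" and ka: "ka \<ge> 0"
    and cw: "\<And>j. (c j / w j) powr r = mu j ^ DIM('a) * ka"
    and Y: "\<And>j. c j / w j \<le> Y"
  shows "(\<integral>\<^sup>+x. ennreal ((\<Sum>j. c j * exp (- mu j * norm (x - p j))) powr r) \<partial>lborel)
      \<le> ennreal ((\<Sum>j. w j) powr r * ka / r ^ DIM('a)) * (\<integral>\<^sup>+x. ennreal (exp (- norm (x::'a))) \<partial>lborel)"
proof -
  define d where "d = DIM('a)"
  define W where "W = (\<Sum>j. w j)"
  define I where "I = (\<integral>\<^sup>+x. ennreal (exp (- norm (x::'a))) \<partial>lborel)"
  have Wp: "W > 0" unfolding W_def using w suminf_pos by blast
  have Y0: "Y \<ge> 0" using Y[of 0] c[of 0] w(1)[of 0] by (smt (verit) divide_nonneg_pos)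
  define A where "A j = W powr (r - 1) * (w j * mu j ^ d * ka)" for j
  have A0: "A j \<ge> 0" for j unfolding A_def using w(1)[of j] mu[of j] ka by simp
  have pw: "ennreal ((\<Sum>j. c j * exp (- mu j * norm (x - p j))) powr r)
      \<le> (\<Sum>j. ennreal (A j * exp (- (r * mu j) * norm (x - p j))))" for x
  proof -
    define be where "be j = exp (- mu j * norm (x - p j))" for j
    have be0: "be j > 0" for j unfolding be_def by simp
    have be1: "be j \<le> 1" for j unfolding be_def using mu[of j] by simp
    define y where "y j = c j * be j / w j" for j
    have y0: "y j \<ge> 0" for j unfolding y_def using c[of j] be0[of j] w(1)[of j] by simp
    have wy: "w j * y j = c j * be j" for j unfolding y_def using w(1)[of j] by simp
    have cY: "c j \<le> Y * w j" for j using Y[of j] w(1)[of j] by (simp add: divide_le_eq)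
    have swy: "summable (\<lambda>j. w j * y j)"
    proof (rule summable_comparison_test'[OF summable_mult[OF w(2), of Y]])
      fix j
      have "norm (w j * y j) = c j * be j" using wy[of j] c[of j] be0[of j] by simp
      also have "\<dots> \<le> c j" using c[of j] be1[of j] by (simp add: mult_left_le)
      also have "\<dots> \<le> Y * w j" by (rule cY)
      finally show "norm (w j * y j) \<le> Y * w j" .
    qed
    have yr: "w j * y j powr r = A j / W powr (r - 1) * exp (- (r * mu j) * norm (x - p j))" for j
    proof -
      have "y j = (c j / w j) * be j" unfolding y_def by simp
      then have "y j powr r = (c j / w j) powr r * be j powr r"
        using c[of j] w(1)[of j] be0[of j] by (simp only: powr_mult less_imp_le divide_nonneg_pos)
      also have "be j powr r = exp (- (r * mu j) * norm (x - p j))"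
        unfolding be_def by (simp add: powr_def)
      finally show ?thesis unfolding A_def d_def using cw[of j] Wp by simp
    qed
    have swyr: "summable (\<lambda>j. w j * y j powr r)"
    proof (rule summable_comparison_test'[OF summable_mult[OF w(2), of "Y powr r"]])
      fix j
      have "y j \<le> Y" unfolding y_def using Y[of j] be1[of j] be0[of j] c[of j] w(1)[of j]
        by (smt (verit) divide_right_mono mult_left_le mult.commute times_divide_eq_right)
      then have "y j powr r \<le> Y powr r" using y0[of j] r by (intro powr_mono2) auto
      then show "norm (w j * y j powr r) \<le> Y powr r * w j"
        using w(1)[of j] by (simp add: mult.commute mult_left_mono)
    qed
    have "(\<Sum>j. c j * exp (- mu j * norm (x - p j))) = (\<Sum>j. w j * y j)"
      using wy unfolding be_def by simp
    then have "(\<Sum>j. c j * exp (- mu j * norm (x - p j))) powr r \<le> W powr (r - 1) * (\<Sum>j. w j * y j powr r)"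
      unfolding W_def using jensen_series[OF w y0 swy swyr r] by simp
    also have "\<dots> = (\<Sum>j. W powr (r - 1) * (w j * y j powr r))"
      using swyr by (rule suminf_mult[symmetric])
    also have "\<dots> = (\<Sum>j. A j * exp (- (r * mu j) * norm (x - p j)))"
      using yr Wp by simp
    finally have le: "(\<Sum>j. c j * exp (- mu j * norm (x - p j))) powr r \<le> (\<Sum>j. A j * exp (- (r * mu j) * norm (x - p j)))" .
    have sA: "summable (\<lambda>j. A j * exp (- (r * mu j) * norm (x - p j)))"
    proof -
      have "(\<lambda>j. A j * exp (- (r * mu j) * norm (x - p j))) = (\<lambda>j. W powr (r - 1) * (w j * y j powr r))"
        using yr Wp by simp
      then show ?thesis using swyr by (simp add: summable_mult)
    qed
    have "(\<Sum>j. ennreal (A j * exp (- (r * mu j) * norm (x - p j)))) = ennreal (\<Sum>j. A j * exp (- (r * mu j) * norm (x - p j)))"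
      using A0 sA by (intro suminf_ennreal_eq) (auto simp: summable_sums)
    then show ?thesis using le by (simp add: ennreal_leI)
  qed
  have "(\<integral>\<^sup>+x. ennreal ((\<Sum>j. c j * exp (- mu j * norm (x - p j))) powr r) \<partial>lborel)
      \<le> (\<integral>\<^sup>+x. (\<Sum>j. ennreal (A j * exp (- (r * mu j) * norm (x - p j)))) \<partial>lborel)"
    by (intro nn_integral_mono pw)
  also have "\<dots> = (\<Sum>j. (\<integral>\<^sup>+x. ennreal (A j * exp (- (r * mu j) * norm (x - p j))) \<partial>lborel))"
    by (rule nn_integral_suminf) measurable
  also have "\<dots> = (\<Sum>j. ennreal (W powr (r - 1) * ka / r ^ d) * ennreal (w j) * I)"
  proof (rule suminf_cong)
    fix j
    have rm: "r * mu j > 0" using r mu[of j] by simp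
    have "(\<integral>\<^sup>+x. ennreal (A j * exp (- (r * mu j) * norm (x - p j))) \<partial>lborel)
        = (\<integral>\<^sup>+x. ennreal (A j) * ennreal (exp (- (r * mu j) * norm (x - p j))) \<partial>lborel)"
      using A0 by (simp add: ennreal_mult)
    also have "\<dots> = ennreal (A j) * (\<integral>\<^sup>+x. ennreal (exp (- (r * mu j) * norm (x - p j))) \<partial>lborel)"
      by (rule nn_integral_cmult) measurable
    also have "\<dots> = ennreal (A j) * (ennreal (1 / (r * mu j) ^ d) * I)"
      unfolding I_def d_def using exp_scale_integral[OF rm, of "p j"] by simp
    also have "\<dots> = ennreal (A j * (1 / (r * mu j) ^ d)) * I"
    proof -
      have "ennreal (A j * (1 / (r * mu j) ^ d)) = ennreal (A j) * ennreal (1 / (r * mu j) ^ d)"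
        using A0[of j] rm by (intro ennreal_mult) auto
      then show ?thesis by (simp only: mult.assoc)
    qed
    also have "A j * (1 / (r * mu j) ^ d) = W powr (r - 1) * ka / r ^ d * w j"
      unfolding A_def using mu[of j] r by (simp add: power_mult_distrib field_simps)
    also have "ennreal (W powr (r - 1) * ka / r ^ d * w j) = ennreal (W powr (r - 1) * ka / r ^ d) * ennreal (w j)"
      using ka w(1)[of j] r by (intro ennreal_mult) auto
    finally show "(\<integral>\<^sup>+x. ennreal (A j * exp (- (r * mu j) * norm (x - p j))) \<partial>lborel)
        = ennreal (W powr (r - 1) * ka / r ^ d) * ennreal (w j) * I" .
  qed
  also have "\<dots> = ennreal (W powr (r - 1) * ka / r ^ d) * (\<Sum>j. ennreal (w j)) * I"
    by (simp add: mult.assoc)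
  also have "(\<Sum>j. ennreal (w j)) = ennreal W"
    unfolding W_def using w by (intro suminf_ennreal_eq) (auto simp: summable_sums less_imp_le)
  also have "ennreal (W powr (r - 1) * ka / r ^ d) * ennreal W = ennreal (W powr r * ka / r ^ d)"
  proof -
    have "W powr (r - 1) * ka / r ^ d * W = W powr r * ka / r ^ d"
      using Wp by (simp add: powr_diff field_simps)
    then show ?thesis using Wp ka r by (simp add: ennreal_mult[symmetric])
  qed
  finally show ?thesis unfolding W_def I_def d_def .
qed

lemma vstar_nonneg:
  fixes v :: "nat \<Rightarrow> 'a::euclidean_space"
  assumes om: "\<And>j. om j \<ge> 0"
  shows "vstar om v \<ge> 0"
proof -
  have ne: "{(j, k). j \<noteq> k} \<noteq> ({} :: (nat \<times> nat) set)" by (auto intro!: exI[of _ "(0, 1)"])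
  show ?thesis unfolding vstar_def by (rule cINF_greatest[OF ne]) (auto simp: om)
qed

lemma vstar_le:
  fixes v :: "nat \<Rightarrow> 'a::euclidean_space"
  assumes om: "\<And>j. om j \<ge> 0" and jk: "j \<noteq> k"
  shows "vstar om v \<le> sqrt (om j) * norm (v k - v j)"
proof -
  have bdd: "bdd_below ((\<lambda>jk. sqrt (om (fst jk)) * norm (v (snd jk) - v (fst jk))) ` {(j, k). j \<noteq> k})"
    by (rule bdd_belowI[of _ 0]) (auto simp: om)
  have "(j, k) \<in> {(j, k). j \<noteq> k}" using jk by simp
  from cINF_lower[OF bdd this] show ?thesis unfolding vstar_def by simp
qed

lemma pair_decay:
  fixes v :: "nat \<Rightarrow> 'a::euclidean_space" and x :: 'a
  assumes om: "\<And>j. om j > 0" and jk: "j \<noteq> k" and a: "a > 0" and t: "t > 0"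
  shows "exp (- (a * sqrt (om j)) * norm (x - t *\<^sub>R v j)) * exp (- (a * sqrt (om k)) * norm (x - t *\<^sub>R v k))
     \<le> exp (- a * vstar om v * t)"
proof -
  have om0: "\<And>j. om j \<ge> 0" using om less_imp_le by blast
  define m where "m = min (sqrt (om j)) (sqrt (om k))"
  have m0: "m \<ge> 0" unfolding m_def using om0[of j] om0[of k] by simp
  have vm: "vstar om v \<le> m * norm (v j - v k)"
  proof -
    have "vstar om v \<le> sqrt (om j) * norm (v k - v j)" by (rule vstar_le[OF om0 jk])
    moreover have "vstar om v \<le> sqrt (om k) * norm (v j - v k)" using jk by (intro vstar_le[OF om0]) auto
    ultimately show ?thesis unfolding m_def by (auto simp: min_def norm_minus_commute)
  qed
  have tri: "t * norm (v j - v k) \<le> norm (x - t *\<^sub>R v j) + norm (x - t *\<^sub>R v k)"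
  proof -
    have "t * norm (v j - v k) = norm (t *\<^sub>R v k - t *\<^sub>R v j)"
      using t by (simp add: norm_minus_commute scaleR_diff_right[symmetric])
    also have "t *\<^sub>R v k - t *\<^sub>R v j = (x - t *\<^sub>R v j) - (x - t *\<^sub>R v k)" by simp
    also have "norm \<dots> \<le> norm (x - t *\<^sub>R v j) + norm (x - t *\<^sub>R v k)" by (rule norm_triangle_ineq4)
    finally show ?thesis .
  qed
  have "vstar om v * t \<le> m * (t * norm (v j - v k))"
    using vm t by (simp add: mult.commute mult.left_commute mult_right_mono)
  also have "\<dots> \<le> m * (norm (x - t *\<^sub>R v j) + norm (x - t *\<^sub>R v k))"
    using tri m0 by (rule mult_left_mono)
  also have "\<dots> \<le> sqrt (om j) * norm (x - t *\<^sub>R v j) + sqrt (om k) * norm (x - t *\<^sub>R v k)"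
    unfolding m_def by (simp add: distrib_left add_mono mult_right_mono)
  finally have "a * (vstar om v * t) \<le> a * (sqrt (om j) * norm (x - t *\<^sub>R v j) + sqrt (om k) * norm (x - t *\<^sub>R v k))"
    using a by (simp add: mult_left_mono)
  then show ?thesis by (simp add: exp_add[symmetric] algebra_simps)
qed

lemma sqrt_exp: "sqrt (exp y) = exp (y / 2)"
proof (rule real_sqrt_unique)
  show "(exp (y / 2))\<^sup>2 = exp y" by (simp add: power2_eq_square exp_add[symmetric])
qed simp

lemma exp_powr': "exp (y::real) powr z = exp (z * y)"
  by (simp add: powr_def ln_exp)

theorem mainTheorem8:
  fixes g :: "real \<Rightarrow> real" and \<alpha>1 \<alpha>2 r0 a :: real
    and \<phi> :: "nat \<Rightarrow> 'a::euclidean_space \<Rightarrow> complex" and \<omega> :: "nat \<Rightarrow> real"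
  assumes "F0 DIM('a) g \<alpha>1 \<alpha>2"
    and "\<alpha>2 / (2 + \<alpha>2) \<le> \<alpha>1"
    and "max 1 (real DIM('a) * \<alpha>1 / 2) < r0" and "r0 < 2 + \<alpha>1"
    and "1/2 \<le> \<alpha>1 / r0 + 1 / (2 + \<alpha>2)"
    and "1 < (\<alpha>1 + 1) / r0 + 1 / (2 + \<alpha>2)"
    and "\<forall>j. bound_state g (\<phi> j) (\<omega> j)"
    and "T1 \<phi> \<omega> \<alpha>1 a r0"
  shows "\<exists>c1 C. 0 < c1 \<and> c1 < a / 2 \<and> 0 < C \<and>
    (\<forall>(v :: nat \<Rightarrow> 'a) (\<gamma> :: nat \<Rightarrow> real) (t :: real). 0 < t \<longrightarrow>
       (let H = source g \<phi> \<omega> v \<gamma> t;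
            B = C * exp (- c1 * vstar \<omega> v * t);
            p = (2 + \<alpha>2) / (1 + \<alpha>2)
        in (AE x in lebesgue. cmod (H x) \<le> B) \<and>
           H \<in> borel_measurable lebesgue \<and>
           (\<integral>\<^sup>+ x. ennreal (cmod (H x) powr p) \<partial>lebesgue) \<le> ennreal (B powr p)))"
proof -
  note F = assms(1)
  have a1: "0 < \<alpha>1" and a12: "\<alpha>1 \<le> \<alpha>2" using F unfolding F0_def by auto
  have cg: "continuous_on {0..} g" using F unfolding F0_def by auto
  obtain D where a: "0 < a" "a < 1" and D: "D > 0"
    and Db: "\<forall>j x. cmod (\<phi> j x) + \<omega> j powr (-1/2) * gradnorm (\<phi> j) x
                 \<le> D * \<omega> j powr (1 / \<alpha>1) * exp (- a * sqrt (\<omega> j) * norm x)"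
    and r01: "1 \<le> r0" and rd: "real DIM('a) * \<alpha>1 / 2 < r0"
    and sumw: "summable (\<lambda>j. \<omega> j powr (1 / \<alpha>1 - real DIM('a) / (2 * r0)))"
    using assms(8) unfolding T1_def by blast
  have om: "\<And>j. \<omega> j > 0" using assms(7) unfolding bound_state_def by blast
  have phicont: "continuous_on UNIV (\<phi> j)" for j
  proof -
    have "\<forall>x. \<phi> j differentiable (at x)" using assms(7) unfolding bound_state_def C2fun_def by blast
    then show ?thesis by (intro differentiable_imp_continuous_on) (simp add: differentiable_on_def differentiable_at_withinI)
  qed
  define dd where "dd = real DIM('a)"
  define e where "e = 1 / \<alpha>1 - dd / (2 * r0)"
  define gd where "gd = dd / (2 * r0)"
  have r0p: "r0 > 0" using r01 by simp
  have dd1: "dd \<ge> 1" unfolding dd_def by simp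
  have gd0: "gd > 0" unfolding gd_def using dd1 r0p by simp
  have e0: "e > 0"
  proof -
    have "dd * \<alpha>1 < 2 * r0" using rd unfolding dd_def by simp
    then have "dd / (2 * r0) < 1 / \<alpha>1" using a1 r0p by (simp add: field_simps)
    then show ?thesis unfolding e_def by simp
  qed
  define wt where "wt j = D * \<omega> j powr e" for j
  have wtp: "wt j > 0" for j unfolding wt_def using D om[of j] by simp
  have swt: "summable wt" unfolding wt_def using sumw unfolding e_def dd_def by (intro summable_mult)
  define Z where "Z = (\<Sum>j. \<omega> j powr e)"
  have oZ: "\<omega> j powr e \<le> Z" for j unfolding Z_def
    using sumw unfolding e_def[symmetric] dd_def[symmetric] by (rule term_le_suminf) simp
  define Y where "Y = Z powr (gd / e)"
  have rat: "\<omega> j powr gd \<le> Y" for j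
  proof -
    have "\<omega> j powr gd = (\<omega> j powr e) powr (gd / e)" using e0 by (simp add: powr_powr)
    also have "\<dots> \<le> Z powr (gd / e)" using oZ[of j] gd0 e0 by (intro powr_mono2) auto
    finally show ?thesis unfolding Y_def .
  qed
  define cc where "cc j = D * \<omega> j powr (1 / \<alpha>1)" for j
  have ccw: "cc j = wt j * \<omega> j powr gd" for j
  proof -
    have "1 / \<alpha>1 = e + gd" unfolding e_def gd_def by simp
    then show ?thesis unfolding cc_def wt_def by (simp add: powr_add)
  qed
  have cc0: "cc j \<ge> 0" for j unfolding cc_def using D by simp
  have ccY: "cc j / wt j \<le> Y" for j using ccw[of j] wtp[of j] rat[of j] by simp
  have scc: "summable cc"
  proof (rule summable_comparison_test'[OF summable_mult[OF swt, of Y]])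
    fix j
    have "cc j \<le> Y * wt j" using ccY[of j] wtp[of j] by (simp add: divide_le_eq)
    then show "norm (cc j) \<le> Y * wt j" using cc0[of j] by simp
  qed
  define Ms where "Ms = suminf cc"
  have Ms0: "Ms \<ge> 0" unfolding Ms_def using scc cc0 by (simp add: suminf_nonneg)
  obtain K where K0: "K \<ge> 0" and K: "\<forall>z. cmod z \<le> Ms \<longrightarrow> cmod (fnl g z) \<le> K * cmod z powr (1 + \<alpha>1)"
    using fnl_growth[OF F Ms0] by blast
  obtain L where L0: "L \<ge> 0" and L: "\<forall>z w. cmod z \<le> Ms \<longrightarrow> cmod w \<le> Ms \<longrightarrow> cmod (fnl g z - fnl g w) \<le> L * cmod (z - w)"
    using fnl_lip[OF F Ms0] by blast
  define mu where "mu j = a * sqrt (\<omega> j)" for j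
  have mup: "mu j > 0" for j unfolding mu_def using a om[of j] by simp
  define ka where "ka = 1 / a ^ DIM('a)"
  have ka0: "ka \<ge> 0" unfolding ka_def using a by simp
  have cw: "(cc j / wt j) powr r0 = mu j ^ DIM('a) * ka" for j
  proof -
    have "cc j / wt j = \<omega> j powr gd" using ccw[of j] wtp[of j] by simp
    then have "(cc j / wt j) powr r0 = \<omega> j powr (gd * r0)" by (simp add: powr_powr)
    also have "gd * r0 = real DIM('a) * (1/2)" unfolding gd_def dd_def using r0p by simp
    also have "\<omega> j powr (real DIM('a) * (1/2)) = (\<omega> j powr (1/2)) ^ DIM('a)"
      using om[of j] by (simp add: powr_power)
    also have "\<omega> j powr (1/2) = sqrt (\<omega> j)" using om[of j] by (simp add: powr_half_sqrt)
    also have "sqrt (\<omega> j) ^ DIM('a) = mu j ^ DIM('a) * ka"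
      unfolding mu_def ka_def using a by (simp add: power_mult_distrib)
    finally show ?thesis .
  qed
  define I where "I = (\<integral>\<^sup>+x. ennreal (exp (- norm (x::'a))) \<partial>lborel)"
  define Ir where "Ir = enn2real I"
  have Ifin: "I < top" unfolding I_def by (rule exp_norm_integral_finite)
  have Ieq: "I = ennreal Ir" unfolding Ir_def using Ifin by simp
  have Ir0: "Ir \<ge> 0" unfolding Ir_def by simp
  define Bint where "Bint = (\<Sum>j. wt j) powr r0 * ka / r0 ^ DIM('a) * Ir"
  have Bint0: "Bint \<ge> 0" unfolding Bint_def using ka0 Ir0 r0p by simp
  define p where "p = (2 + \<alpha>2) / (1 + \<alpha>2)"
  define q where "q = r0 / (1 + \<alpha>1)"
  have a2: "\<alpha>2 > 0" using a1 a12 by simp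
  have p0: "p > 0" unfolding p_def using a2 by simp
  have q0: "q > 0" unfolding q_def using a1 r0p by simp
  have qp: "q < p"
  proof -
    have "(1 + \<alpha>2) / (2 + \<alpha>2) = 1 - 1 / (2 + \<alpha>2)" using a2 by (simp add: field_simps)
    then have "(1 + \<alpha>2) / (2 + \<alpha>2) < (\<alpha>1 + 1) / r0" using assms(6) by simp
    then have "(1 + \<alpha>2) * r0 < (\<alpha>1 + 1) * (2 + \<alpha>2)" using a2 r0p by (simp add: field_simps)
    then show ?thesis unfolding p_def q_def using a1 a2 by (simp add: field_simps)
  qed
  define c1 where "c1 = a * (p - q) / (2 * p)"
  have c10: "0 < c1" unfolding c1_def using a qp p0 by simp
  have c1a: "c1 < a / 2"
  proof -
    have "(p - q) / p < 1" using q0 p0 by simp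
    then have "a * ((p - q) / p) < a * 1" using a by (intro mult_strict_left_mono) auto
    then show ?thesis unfolding c1_def by simp
  qed
  define A0 where "A0 = (2 * L * Ms) powr (p - q) * (2 * K) powr q"
  have A00: "A0 \<ge> 0" unfolding A0_def by simp
  define C where "C = max (2 * L * Ms + 1) ((A0 * Bint + 1) powr (1 / p))"
  have LM0: "0 \<le> 2 * L * Ms" using L0 Ms0 by simp
  have C0: "C > 0" unfolding C_def using LM0 by (simp add: less_max_iff_disj)
  have Cp: "A0 * Bint \<le> C powr p"
  proof -
    have "(A0 * Bint + 1) powr (1 / p) \<le> C" unfolding C_def by simp
    then have "((A0 * Bint + 1) powr (1 / p)) powr p \<le> C powr p" using p0 by (intro powr_mono2) auto
    moreover have "((A0 * Bint + 1) powr (1 / p)) powr p = A0 * Bint + 1"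
      using p0 A00 Bint0 by (simp add: powr_powr)
    ultimately show ?thesis by simp
  qed
  have CL: "2 * L * Ms \<le> C" unfolding C_def by simp
  show ?thesis
  proof (intro exI conjI allI impI)
    show "0 < c1" by (rule c10)
    show "c1 < a / 2" by (rule c1a)
    show "0 < C" by (rule C0)
    fix v :: "nat \<Rightarrow> 'a" and \<gamma> :: "nat \<Rightarrow> real" and t :: real
    assume t: "0 < t"
    define vs where "vs = vstar \<omega> v"
    have vs0: "vs \<ge> 0" unfolding vs_def using om by (intro vstar_nonneg less_imp_le)
    define E where "E = exp (- a * vs * t)"
    define X where "X = exp (- c1 * vs * t)"
    define H where "H = source g \<phi> \<omega> v \<gamma> t"
    define Fx where "Fx x = (\<Sum>j. cc j * exp (- mu j * norm (x - t *\<^sub>R v j)))" for x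
    have sqE: "sqrt E \<le> X"
    proof -
      have "sqrt E = exp (- a * vs * t / 2)" unfolding E_def by (rule sqrt_exp)
      also have "\<dots> \<le> X"
      proof -
        have "0 \<le> vs * t" using vs0 t by simp
        then have "(c1 * 2) * (vs * t) \<le> a * (vs * t)" using c1a by (intro mult_right_mono) auto
        then show ?thesis unfolding X_def by (simp add: algebra_simps)
      qed
      finally show ?thesis .
    qed
    have Hb: "cmod (H x) \<le> 2 * L * Ms * sqrt E \<and> cmod (H x) \<le> 2 * K * Fx x powr (1 + \<alpha>1)" for x
    proof -
      define u where "u j = soliton (\<phi> j) (\<omega> j) (v j) (\<gamma> j) t x" for j
      define b where "b j = exp (- mu j * norm (x - t *\<^sub>R v j))" for j
      have b0: "0 \<le> b j" for j unfolding b_def by simp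
      have b1: "b j \<le> 1" for j unfolding b_def using mup[of j] by simp
      have ub: "cmod (u j) \<le> cc j * b j" for j
      proof -
        have "cmod (u j) = cmod (\<phi> j (x - t *\<^sub>R v j))" unfolding u_def soliton_def by (simp add: norm_mult)
        also have "\<dots> \<le> D * \<omega> j powr (1 / \<alpha>1) * exp (- a * sqrt (\<omega> j) * norm (x - t *\<^sub>R v j))"
        proof -
          have "0 \<le> \<omega> j powr (-1/2) * gradnorm (\<phi> j) (x - t *\<^sub>R v j)" unfolding gradnorm_def by (intro mult_nonneg_nonneg powr_ge_zero real_sqrt_ge_zero sum_nonneg) simp
          then show ?thesis using Db by (smt (verit))
        qed
        also have "\<dots> = cc j * b j" unfolding cc_def b_def mu_def by (simp add: mult.assoc)
        finally show ?thesis .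
      qed
      have bb: "b j * b k \<le> E" if "j \<noteq> k" for j k
        unfolding b_def mu_def E_def vs_def using pair_decay[OF om that a(1) t, where x=x and v=v] by simp
      have E0: "E \<ge> 0" unfolding E_def by simp
      have Hx: "H x = fnl g (\<Sum>j. u j) - (\<Sum>j. fnl g (u j))" unfolding H_def source_def u_def by simp
      have "cmod (H x) \<le> 2 * L * suminf cc * sqrt E"
        unfolding Hx by (rule key_pointwise[OF scc cc0 b0 ub bb E0 b1 L0 L[unfolded Ms_def]])
      moreover have "cmod (H x) \<le> 2 * K * (\<Sum>j. cc j * b j) powr (1 + \<alpha>1)"
        unfolding Hx by (rule key_growth[OF scc cc0 b0 b1 ub K0 K[unfolded Ms_def] a1])
      ultimately show ?thesis unfolding Ms_def Fx_def b_def by simp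
    qed
    have Fx0: "Fx x \<ge> 0" for x unfolding Fx_def
      by (rule suminf_nonneg) (rule summable_comparison_test'[OF scc], auto simp: cc0 mup less_imp_le mult_left_le cc0 intro: mult_nonneg_nonneg)
    have Linf: "cmod (H x) \<le> C * X" for x
    proof -
      have "cmod (H x) \<le> 2 * L * Ms * sqrt E" using Hb by blast
      also have "\<dots> \<le> 2 * L * Ms * X" using sqE L0 Ms0 by (intro mult_left_mono) auto
      also have "\<dots> \<le> C * X" using CL unfolding X_def by (intro mult_right_mono) auto
      finally show ?thesis .
    qed
    have Hp: "cmod (H x) powr p \<le> A0 * X powr p * Fx x powr r0" for x
    proof -
      have "cmod (H x) powr p = cmod (H x) powr (p - q) * cmod (H x) powr q"
        by (simp add: powr_add[symmetric])
      also have "\<dots> \<le> (2 * L * Ms * sqrt E) powr (p - q) * (2 * K * Fx x powr (1 + \<alpha>1)) powr q"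
        using Hb[of x] qp q0 by (intro mult_mono powr_mono2) auto
      also have "(2 * L * Ms * sqrt E) powr (p - q) = (2 * L * Ms) powr (p - q) * X powr p"
      proof -
        have "(2 * L * Ms * sqrt E) powr (p - q) = (2 * L * Ms) powr (p - q) * sqrt E powr (p - q)"
          using L0 Ms0 by (simp add: powr_mult)
        also have "sqrt E powr (p - q) = X powr p"
          unfolding E_def X_def sqrt_exp exp_powr' c1_def using p0 by (simp add: field_simps)
        finally show ?thesis .
      qed
      also have "(2 * K * Fx x powr (1 + \<alpha>1)) powr q = (2 * K) powr q * Fx x powr r0"
      proof -
        have "(2 * K * Fx x powr (1 + \<alpha>1)) powr q = (2 * K) powr q * (Fx x powr (1 + \<alpha>1)) powr q"
          using K0 by (simp add: powr_mult)
        also have "(Fx x powr (1 + \<alpha>1)) powr q = Fx x powr r0"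
          unfolding q_def using a1 by (simp add: powr_powr)
        finally show ?thesis .
      qed
      finally show ?thesis unfolding A0_def by (simp add: ac_simps)
    qed
    have cu: "continuous_on UNIV (\<lambda>x. soliton (\<phi> j) (\<omega> j) (v j) (\<gamma> j) t x)" for j
    proof -
      have c1': "continuous_on UNIV (\<lambda>x. \<phi> j (x - t *\<^sub>R v j))"
        by (rule continuous_on_compose2[OF phicont[of j]]) (auto intro!: continuous_intros)
      show ?thesis unfolding soliton_def by (intro continuous_intros c1')
    qed
    have cf: "continuous_on UNIV (fnl g)"
    proof -
      have "continuous_on UNIV (\<lambda>z::complex. g ((cmod z)\<^sup>2))"
        by (rule continuous_on_compose2[OF cg]) (auto intro!: continuous_intros)
      then show ?thesis unfolding fnl_def by (intro continuous_intros)
    qed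
    have [measurable]: "(\<lambda>x. soliton (\<phi> j) (\<omega> j) (v j) (\<gamma> j) t x) \<in> borel_measurable borel" for j
      by (rule borel_measurable_continuous_onI[OF cu])
    have [measurable]: "fnl g \<in> borel_measurable borel"
      by (rule borel_measurable_continuous_onI[OF cf])
    have Hmb: "H \<in> borel_measurable borel" unfolding H_def source_def[abs_def] by measurable
    have Hm: "H \<in> borel_measurable lebesgue"
      using Hmb by (intro measurable_completion) simp
    have Fm: "(\<lambda>x. ennreal (Fx x powr r0)) \<in> borel_measurable lborel" unfolding Fx_def by measurable
    have int: "(\<integral>\<^sup>+ x. ennreal (cmod (H x) powr p) \<partial>lebesgue) \<le> ennreal ((C * X) powr p)"
    proof -
      have "(\<integral>\<^sup>+ x. ennreal (cmod (H x) powr p) \<partial>lebesgue) \<le> (\<integral>\<^sup>+ x. ennreal (A0 * X powr p * Fx x powr r0) \<partial>lebesgue)"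
        by (intro nn_integral_mono ennreal_leI Hp)
      also have "\<dots> = (\<integral>\<^sup>+ x. ennreal (A0 * X powr p) * ennreal (Fx x powr r0) \<partial>lborel)"
        by (simp add: nn_integral_completion ennreal_mult A00)
      also have "\<dots> = ennreal (A0 * X powr p) * (\<integral>\<^sup>+ x. ennreal (Fx x powr r0) \<partial>lborel)"
        by (rule nn_integral_cmult[OF Fm])
      also have "(\<integral>\<^sup>+ x. ennreal (Fx x powr r0) \<partial>lborel) \<le> ennreal Bint"
      proof -
        have "(\<integral>\<^sup>+ x. ennreal (Fx x powr r0) \<partial>lborel)
            \<le> ennreal ((\<Sum>j. wt j) powr r0 * ka / r0 ^ DIM('a)) * I"
          unfolding Fx_def I_def
          by (rule integral_F_bound[OF wtp swt cc0 mup r01 ka0 cw ccY])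
        also have "\<dots> = ennreal Bint" unfolding Ieq Bint_def using ka0 r0p Ir0
          by (intro ennreal_mult[symmetric]) auto
        finally show ?thesis .
      qed
      also have "ennreal (A0 * X powr p) * ennreal Bint = ennreal (A0 * Bint * X powr p)"
        using A00 Bint0 by (simp add: ennreal_mult[symmetric] ac_simps)
      also have "\<dots> \<le> ennreal ((C * X) powr p)"
      proof (rule ennreal_leI)
        have "A0 * Bint * X powr p \<le> C powr p * X powr p" using Cp by (intro mult_right_mono) auto
        also have "\<dots> = (C * X) powr p" using C0 unfolding X_def by (simp add: powr_mult)
        finally show "A0 * Bint * X powr p \<le> (C * X) powr p" .
      qed
      finally show ?thesis by (simp add: mult_left_mono)
    qed
    show "let H = source g \<phi> \<omega> v \<gamma> t; B = C * exp (- c1 * vstar \<omega> v * t); p = (2 + \<alpha>2) / (1 + \<alpha>2)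
        in (AE x in lebesgue. cmod (H x) \<le> B) \<and> H \<in> borel_measurable lebesgue \<and>
           (\<integral>\<^sup>+ x. ennreal (cmod (H x) powr p) \<partial>lebesgue) \<le> ennreal (B powr p)"
      unfolding Let_def H_def[symmetric] vs_def[symmetric] X_def[symmetric] p_def[symmetric]
      using Linf Hm int by (auto intro: AE_I2)
  qed
qed

end
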